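(* Let $\Pi$ be a Klein tableau with entries at most $2$, encoded as $\Pi=[\gamma;\zeta=\beta^0;\beta^1,\ldots,\beta^s=\beta]$. Define $$x(\Pi)=\sum_j\big(\bar\zeta_j-\bar\gamma_j+|\beta^{j-1}|-|\beta^j|\big)\sum_{k>j}\big(\bar\beta^{j-1}_k-\bar\zeta_k\big)+\sum_j\sum_{\ell>j}\big(\bar\beta^j_{\ell+1}-\bar\beta^{j-1}_{\ell+1}\big)\sum_{k=j+1}^{\ell}\big(\bar\beta^{j-1}_k-\bar\zeta_k\big).$$ Then $x(\Pi)$ equals the number $x(\Delta)$ of crossings in the arc diagram $\Delta$ of $\Pi$.
   Context: For a partition $\lambda$ the Young diagram has columns of lengths $\lambda_1,\lambda_2,\ldots$; rows numbered from the top starting at $1$; $\bar\lambda$ is the conjugate partition so $\bar\lambda_k$ is the number of boxes in row $k$; $|\lambda|=\sum_i\lambda_i$. An LR-tableau of type $(\alpha,\beta,\gamma)$ with entries at most $2$ is a filling of the skew diagram $\beta\setminus\gamma$ with $\bar\alpha_1$ entries $1$ and $\bar\alpha_2$ entries $2$, weakly increasing along rows, strictly increasing down columns, and such that for each $c\ge0$ the number of entries $2$ in columns to the right of column $c$ is at most the number of entries $1$ there. A Klein tableau is such an LR-tableau in which each entry $2$ carries a subscript $r$ ($2_r$) with: (a) if $2_r$ is in row $m$ then $1\le r\le m-1$; (b) if $2_r$ is in row $m$ and the box above it contains $1$ then $r=m-1$; (c) the number of entries $2_r$ is at most the number of entries $1$ in row $r$. The encoding $[\gamma;\zeta;\beta^1,\dots,\beta^s]$: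 $\gamma$ is the shape of the empty boxes, $\zeta=\beta^0$ the shape formed by the empty boxes and the boxes $1$, and $\beta^j$ the shape formed by the empty boxes, the boxes $1$ and the boxes $2_i$ with $i\le j$. The arc diagram $\Delta$ of $\Pi$ is the multiset consisting of an arc $(m,r)$ for each entry $2_r$ in row $m$, together with, at each position $r$, as many poles as the number of entries $1$ in row $r$ minus the number of arcs ending at $r$. The number of crossings $x(\Delta)$ is the number (with multiplicity) of pairs of arcs $(m,r),(n,s)$ with $m>n>r>s$ plus the number of pairs (arc $(m,s)$, pole at $r$) with $m>r>s$. *)

theory Defs
  imports "HOL-Library.Multiset"
begin

text \<open>Partitions are lists of column lengths [lambda_1, lambda_2, ...] (weakly decreasing).
Boxes are pairs (m, c): row m >= 1 (numbered from the top), column c >= 1.\<close>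

definition is_partition :: "nat list \<Rightarrow> bool" where
  "is_partition lam \<longleftrightarrow> sorted_wrt (\<ge>) lam"

definition diagram :: "nat list \<Rightarrow> (nat \<times> nat) set" where
  "diagram lam = {(m, c). 1 \<le> c \<and> c \<le> length lam \<and> 1 \<le> m \<and> m \<le> lam ! (c - 1)}"

text \<open>Number of boxes in row k of a shape (a set of boxes): the conjugate partition entry.\<close>
definition rowlen :: "(nat \<times> nat) set \<Rightarrow> nat \<Rightarrow> nat" where
  "rowlen D k = card {c. (k, c) \<in> D}"

definition nrows :: "(nat \<times> nat) set \<Rightarrow> nat" where
  "nrows D = Max (insert 0 (fst ` D))"

datatype entry = One | Two nat

fun val :: "entry \<Rightarrow> nat" where
  "val One = 1"
| "val (Two r) = 2"

fun is_two :: "entry \<Rightarrow> bool" where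
  "is_two One = False"
| "is_two (Two r) = True"

fun sub :: "entry \<Rightarrow> nat" where
  "sub One = 0"
| "sub (Two r) = r"

definition skew :: "nat list \<Rightarrow> nat list \<Rightarrow> (nat \<times> nat) set" where
  "skew beta gamma = diagram beta - diagram gamma"

text \<open>LR-tableau with entries at most 2 on the skew shape beta minus gamma; the filling T is
given as a function of (row, column), only its values on the skew boxes matter.
(The type alpha is determined by the numbers of entries 1 and 2.)\<close>
definition lr_tableau :: "nat list \<Rightarrow> nat list \<Rightarrow> (nat \<Rightarrow> nat \<Rightarrow> entry) \<Rightarrow> bool" where
  "lr_tableau beta gamma T \<longleftrightarrow>
     is_partition beta \<and> is_partition gamma \<and> diagram gamma \<subseteq> diagram beta \<and>
     (\<forall>m c c'. (m, c) \<in> skew beta gamma \<and> (m, c') \<in> skew beta gamma \<and> c < c'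
        \<longrightarrow> val (T m c) \<le> val (T m c')) \<and>
     (\<forall>m m' c. (m, c) \<in> skew beta gamma \<and> (m', c) \<in> skew beta gamma \<and> m < m'
        \<longrightarrow> val (T m c) < val (T m' c)) \<and>
     (\<forall>c0. card {(m, c). (m, c) \<in> skew beta gamma \<and> c > c0 \<and> is_two (T m c)}
           \<le> card {(m, c). (m, c) \<in> skew beta gamma \<and> c > c0 \<and> T m c = One})"

definition ones_in_row :: "nat list \<Rightarrow> nat list \<Rightarrow> (nat \<Rightarrow> nat \<Rightarrow> entry) \<Rightarrow> nat \<Rightarrow> nat" where
  "ones_in_row beta gamma T r = card {c. (r, c) \<in> skew beta gamma \<and> T r c = One}"

definition num_twos_sub :: "nat list \<Rightarrow> nat list \<Rightarrow> (nat \<Rightarrow> nat \<Rightarrow> entry) \<Rightarrow> nat \<Rightarrow> nat" where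
  "num_twos_sub beta gamma T r = card {(m, c). (m, c) \<in> skew beta gamma \<and> T m c = Two r}"

definition klein_tableau :: "nat list \<Rightarrow> nat list \<Rightarrow> (nat \<Rightarrow> nat \<Rightarrow> entry) \<Rightarrow> bool" where
  "klein_tableau beta gamma T \<longleftrightarrow>
     lr_tableau beta gamma T \<and>
     (\<forall>m c r. (m, c) \<in> skew beta gamma \<and> T m c = Two r \<longrightarrow> 1 \<le> r \<and> r \<le> m - 1) \<and>
     (\<forall>m c r. (m, c) \<in> skew beta gamma \<and> T m c = Two r \<and>
        (m - 1, c) \<in> skew beta gamma \<and> T (m - 1) c = One \<longrightarrow> r = m - 1) \<and>
     (\<forall>r. num_twos_sub beta gamma T r \<le> ones_in_row beta gamma T r)"

text \<open>The encoding [gamma; zeta = beta^0; beta^1, ..., beta^s = beta] as shapes (box sets).\<close>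
definition zeta_shape :: "nat list \<Rightarrow> nat list \<Rightarrow> (nat \<Rightarrow> nat \<Rightarrow> entry) \<Rightarrow> (nat \<times> nat) set" where
  "zeta_shape beta gamma T = diagram gamma \<union> {(m, c). (m, c) \<in> skew beta gamma \<and> T m c = One}"

definition beta_shape :: "nat list \<Rightarrow> nat list \<Rightarrow> (nat \<Rightarrow> nat \<Rightarrow> entry) \<Rightarrow> nat \<Rightarrow> (nat \<times> nat) set" where
  "beta_shape beta gamma T j = zeta_shape beta gamma T \<union>
     {(m, c). (m, c) \<in> skew beta gamma \<and> (\<exists>i. 1 \<le> i \<and> i \<le> j \<and> T m c = Two i)}"

text \<open>x(Pi). The sums over j, k, l run over all positive indices; all terms vanish beyond the
number of rows of beta, so they are truncated there.\<close>
definition x_Pi :: "nat list \<Rightarrow> nat list \<Rightarrow> (nat \<Rightarrow> nat \<Rightarrow> entry) \<Rightarrow> int" where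
  "x_Pi beta gamma T =
    (let N = nrows (diagram beta);
         g = diagram gamma; z = zeta_shape beta gamma T; b = beta_shape beta gamma T
     in (\<Sum>j\<in>{1..N}.
           (int (rowlen z j) - int (rowlen g j) + int (card (b (j - 1))) - int (card (b j)))
           * (\<Sum>k\<in>{j+1..N}. int (rowlen (b (j - 1)) k) - int (rowlen z k)))
      + (\<Sum>j\<in>{1..N}. \<Sum>l\<in>{j+1..N}.
           (int (rowlen (b j) (l + 1)) - int (rowlen (b (j - 1)) (l + 1)))
           * (\<Sum>k\<in>{j+1..l}. int (rowlen (b (j - 1)) k) - int (rowlen z k))))"

datatype item = Arc nat nat | Pole nat

definition arc_diagram :: "nat list \<Rightarrow> nat list \<Rightarrow> (nat \<Rightarrow> nat \<Rightarrow> entry) \<Rightarrow> item multiset" where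
  "arc_diagram beta gamma T =
     image_mset (\<lambda>(m, c). Arc m (sub (T m c)))
       (mset_set {(m, c). (m, c) \<in> skew beta gamma \<and> is_two (T m c)})
   + (\<Sum>r\<in>{1..nrows (diagram beta)}.
        replicate_mset (ones_in_row beta gamma T r - num_twos_sub beta gamma T r) (Pole r))"

fun crosses :: "item \<Rightarrow> item \<Rightarrow> bool" where
  "crosses (Arc m r) (Arc n s) \<longleftrightarrow> m > n \<and> n > r \<and> r > s"
| "crosses (Arc m s) (Pole r) \<longleftrightarrow> m > r \<and> r > s"
| "crosses _ _ \<longleftrightarrow> False"

definition x_Delta :: "item multiset \<Rightarrow> nat" where
  "x_Delta D = (\<Sum>a\<in>set_mset D. \<Sum>b\<in>set_mset D.
                  if crosses a b then count D a * count D b else 0)"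

end

theory Submission
  imports Defs
begin


lemma sum_mset_count:
  fixes f :: "'a \<Rightarrow> 'b::comm_semiring_1"
  shows "sum_mset (image_mset f D) = (\<Sum>x\<in>set_mset D. of_nat (count D x) * f x)"
proof (induction D)
  case empty then show ?case by simp
next
  case (add x D)
  show ?case
  proof (cases "x \<in># D")
    case True
    then have "(\<Sum>y\<in>set_mset (add_mset x D). of_nat (count (add_mset x D) y) * f y)
       = (\<Sum>y\<in>set_mset D. of_nat (count D y) * f y + (if y = x then f x else 0))"
      by (intro sum.cong) (auto simp: algebra_simps insert_absorb)
    also have "\<dots> = (\<Sum>y\<in>set_mset D. of_nat (count D y) * f y) + f x"
      using True by (simp add: sum.distrib)
    finally show ?thesis using add by (simp add: ac_simps)
  next
    case False
    then have "(\<Sum>y\<in>set_mset (add_mset x D). of_nat (count (add_mset x D) y) * f y)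
       = f x + (\<Sum>y\<in>set_mset D. of_nat (count (add_mset x D) y) * f y)"
      by (simp add: not_in_iff)
    also have "(\<Sum>y\<in>set_mset D. of_nat (count (add_mset x D) y) * f y) = (\<Sum>y\<in>set_mset D. of_nat (count D y) * f y)"
      using False by (intro sum.cong) auto
    finally show ?thesis using add by simp
  qed
qed

lemma image_mset_sum: "image_mset f (sum g R) = (\<Sum>r\<in>R. image_mset f (g r))"
  by (induct R rule: infinite_finite_induct) auto

lemma x_Delta_alt:
  "x_Delta D = sum_mset (image_mset (\<lambda>a. sum_mset (image_mset (\<lambda>b. if crosses a b then 1 else 0) D)) D)"
  unfolding x_Delta_def sum_mset_count
  by (auto simp: sum_distrib_left intro!: sum.cong)



lemma finite_diagram: "finite (diagram lam)"
proof (rule finite_subset)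
  show "diagram lam \<subseteq> {..Max (insert 0 (set lam))} \<times> {..length lam}"
  proof
    fix p assume "p \<in> diagram lam"
    then obtain m c where p: "p = (m,c)" "1 \<le> c" "c \<le> length lam" "m \<le> lam ! (c - 1)"
      by (auto simp: diagram_def)
    have "lam ! (c-1) \<in> set lam" using p by auto
    then have "lam ! (c-1) \<le> Max (insert 0 (set lam))" by simp
    then have "m \<le> Max (insert 0 (set lam))" using p(4) by linarith
    then show "p \<in> {..Max (insert 0 (set lam))} \<times> {..length lam}" using p by auto
  qed
qed simp

lemma finite_row: "finite X \<Longrightarrow> finite {c. (j,c) \<in> X}"
  by (rule finite_subset[of _ "snd ` X"]) force+

lemma finite_skew: "finite (skew beta gamma)"
  unfolding skew_def using finite_diagram by auto

lemma rowlen_z: "rowlen (zeta_shape beta gamma T) j = rowlen (diagram gamma) j + ones_in_row beta gamma T j"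
proof -
  have "{c. (j,c) \<in> zeta_shape beta gamma T} = {c. (j,c) \<in> diagram gamma} \<union> {c. (j, c) \<in> skew beta gamma \<and> T j c = One}"
    by (auto simp: zeta_shape_def)
  moreover have "card (\<dots>) = card {c. (j,c) \<in> diagram gamma} + card {c. (j, c) \<in> skew beta gamma \<and> T j c = One}"
    by (rule card_Un_disjoint) (auto simp: skew_def intro: finite_row[OF finite_diagram] finite_subset[OF _ finite_row[OF finite_diagram]])
  ultimately show ?thesis by (simp add: rowlen_def ones_in_row_def)
qed

lemma finite_beta_shape: "finite (beta_shape beta gamma T j)"
proof -
  have "beta_shape beta gamma T j \<subseteq> diagram gamma \<union> diagram beta"
    by (auto simp: beta_shape_def zeta_shape_def skew_def)
  then show ?thesis using finite_diagram by (meson finite_UnI finite_subset)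
qed

lemma card_b:
  assumes "1 \<le> j"
  shows "card (beta_shape beta gamma T j) = card (beta_shape beta gamma T (j-1)) + num_twos_sub beta gamma T j"
proof -
  have "beta_shape beta gamma T j = beta_shape beta gamma T (j-1) \<union> {(m, c). (m, c) \<in> skew beta gamma \<and> T m c = Two j}"
    using assms by (auto simp: beta_shape_def le_Suc_eq)
  moreover have "card (\<dots>) = card (beta_shape beta gamma T (j-1)) + card {(m, c). (m, c) \<in> skew beta gamma \<and> T m c = Two j}"
    by (rule card_Un_disjoint) (auto simp: beta_shape_def zeta_shape_def skew_def finite_beta_shape
         intro: finite_subset[OF _ finite_diagram])
  ultimately show ?thesis by (simp add: num_twos_sub_def)
qed

lemma rowlen_b:
  "rowlen (beta_shape beta gamma T i) k = rowlen (zeta_shape beta gamma T) k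
     + card {c. (k,c) \<in> skew beta gamma \<and> (\<exists>t. 1 \<le> t \<and> t \<le> i \<and> T k c = Two t)}"
proof -
  have "{c. (k,c) \<in> beta_shape beta gamma T i} = {c. (k,c) \<in> zeta_shape beta gamma T} \<union> {c. (k,c) \<in> skew beta gamma \<and> (\<exists>t. 1 \<le> t \<and> t \<le> i \<and> T k c = Two t)}"
    by (auto simp: beta_shape_def)
  moreover have "card (\<dots>) = card {c. (k,c) \<in> zeta_shape beta gamma T} + card {c. (k,c) \<in> skew beta gamma \<and> (\<exists>t. 1 \<le> t \<and> t \<le> i \<and> T k c = Two t)}"
    by (rule card_Un_disjoint) (auto simp: zeta_shape_def skew_def intro: finite_row[OF finite_diagram] finite_subset[OF _ finite_row[OF finite_diagram]])
  ultimately show ?thesis by (simp add: rowlen_def)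
qed

lemma cnt_sum:
  assumes K: "klein_tableau beta gamma T"
  shows "card {c. (k,c) \<in> skew beta gamma \<and> (\<exists>t. 1 \<le> t \<and> t \<le> i \<and> T k c = Two t)}
    = (\<Sum>p\<in>{(m, c). (m, c) \<in> skew beta gamma \<and> is_two (T m c)}.
         if fst p = k \<and> sub (T (fst p) (snd p)) \<le> i then 1 else 0)"
proof -
  let ?A = "{(m, c). (m, c) \<in> skew beta gamma \<and> is_two (T m c)}"
  have fA: "finite ?A" by (rule finite_subset[OF _ finite_skew]) auto
  have "{p \<in> ?A. fst p = k \<and> sub (T (fst p) (snd p)) \<le> i} = Pair k ` {c. (k,c) \<in> skew beta gamma \<and> (\<exists>t. 1 \<le> t \<and> t \<le> i \<and> T k c = Two t)}"
  proof (rule set_eqI, rule iffI)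
    fix p assume p: "p \<in> {p \<in> ?A. fst p = k \<and> sub (T (fst p) (snd p)) \<le> i}"
    obtain m c where pm: "p = (m,c)" by force
    then obtain r where r: "T m c = Two r" using p by (cases "T m c") auto
    have "1 \<le> r" using K p pm r unfolding klein_tableau_def by auto
    then show "p \<in> Pair k ` {c. (k,c) \<in> skew beta gamma \<and> (\<exists>t. 1 \<le> t \<and> t \<le> i \<and> T k c = Two t)}"
      using p pm r by auto
  qed auto
  then have "card {c. (k,c) \<in> skew beta gamma \<and> (\<exists>t. 1 \<le> t \<and> t \<le> i \<and> T k c = Two t)}
      = card {p \<in> ?A. fst p = k \<and> sub (T (fst p) (snd p)) \<le> i}"
    by (simp add: card_image inj_on_def)
  also have "\<dots> = (\<Sum>p\<in>?A. if fst p = k \<and> sub (T (fst p) (snd p)) \<le> i then 1 else 0)"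
    using fA by (simp add: sum.inter_filter[symmetric])
  finally show ?thesis .
qed



lemma sum_mset_sum: "sum_mset (sum h R) = (\<Sum>r\<in>R. sum_mset (h r))"
  by (induct R rule: infinite_finite_induct) auto

lemma sum_D2: "sum_mset (image_mset g (\<Sum>r\<in>R. replicate_mset (n r) x)) = (\<Sum>r\<in>R. of_nat (n r) * g x)"
  by (simp add: image_mset_sum sum_mset_sum)

lemma sum_D1: "sum_mset (image_mset g (image_mset f (mset_set A))) = (\<Sum>a\<in>A. g (f a))"
  by (simp add: sum_unfold_sum_mset image_mset.compositionality comp_def)

lemma rhs:
  "x_Delta (arc_diagram beta gamma T) =
    (\<Sum>a\<in>{(m, c). (m, c) \<in> skew beta gamma \<and> is_two (T m c)}. \<Sum>b\<in>{(m, c). (m, c) \<in> skew beta gamma \<and> is_two (T m c)}.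
       if crosses ((\<lambda>(m, c). Arc m (sub (T m c))) a) ((\<lambda>(m, c). Arc m (sub (T m c))) b) then 1 else 0)
  + (\<Sum>a\<in>{(m, c). (m, c) \<in> skew beta gamma \<and> is_two (T m c)}. \<Sum>r\<in>{1..nrows (diagram beta)}.
       (ones_in_row beta gamma T r - num_twos_sub beta gamma T r) *
       (if crosses ((\<lambda>(m, c). Arc m (sub (T m c))) a) (Pole r) then 1 else 0))"
proof -
  define A where "A = {(m, c). (m, c) \<in> skew beta gamma \<and> is_two (T m c)}"
  define f where "f = (\<lambda>(m, c). Arc m (sub (T m c)))"
  define n where "n = (\<lambda>r. ones_in_row beta gamma T r - num_twos_sub beta gamma T r)"
  define R where "R = {1..nrows (diagram beta)}"
  define D1 where "D1 = image_mset f (mset_set A)"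
  define D2 where "D2 = (\<Sum>r\<in>R. replicate_mset (n r) (Pole r))"
  note D2' = D2_def
  have D: "arc_diagram beta gamma T = D1 + D2"
    by (simp add: arc_diagram_def D1_def D2' A_def f_def n_def R_def)
  define F where "F = (\<lambda>a. sum_mset (image_mset (\<lambda>b. if crosses a b then (1::nat) else 0) (D1 + D2)))"
  have D2sum: "sum_mset (image_mset g D2) = (\<Sum>r\<in>R. n r * g (Pole r))" for g :: "item \<Rightarrow> nat"
    unfolding D2' by (simp add: image_mset_sum sum_mset_sum)
  have FP: "F (Pole r) = 0" for r unfolding F_def by simp
  have Ff: "F (f a) = (\<Sum>b\<in>A. if crosses (f a) (f b) then 1 else 0) + (\<Sum>r\<in>R. n r * (if crosses (f a) (Pole r) then 1 else 0))" for a
    unfolding F_def by (simp add: D2sum D1_def sum_D1)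
  have "x_Delta (arc_diagram beta gamma T) = sum_mset (image_mset F D1) + sum_mset (image_mset F D2)"
    unfolding x_Delta_alt D F_def by simp
  also have "sum_mset (image_mset F D2) = 0" by (simp add: D2sum FP)
  also have "sum_mset (image_mset F D1) = (\<Sum>a\<in>A. F (f a))" by (simp add: D1_def sum_D1)
  also have "(\<Sum>a\<in>A. F (f a)) = (\<Sum>a\<in>A. \<Sum>b\<in>A. if crosses (f a) (f b) then 1 else 0) + (\<Sum>a\<in>A. \<Sum>r\<in>R. n r * (if crosses (f a) (Pole r) then 1 else 0))"
    unfolding Ff by (simp add: sum.distrib)
  finally show ?thesis by (simp add: A_def f_def n_def R_def)
qed



lemma delta_if:
  assumes "finite K"
  shows "(\<Sum>k\<in>K. if k = x \<and> Q k then (1::int) else 0) = (if x \<in> K \<and> Q x then 1 else 0)"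
proof -
  have "(\<Sum>k\<in>K. if k = x \<and> Q k then (1::int) else 0) = (\<Sum>k\<in>K. if k = x then (if Q x then 1 else 0) else 0)"
    by (rule sum.cong) auto
  also have "\<dots> = (if x \<in> K then (if Q x then 1 else 0) else 0)" using assms by (simp add: sum.delta')
  finally show ?thesis by simp
qed

lemma double_delta:
  fixes sa ma N mb sbb :: nat
  assumes "1 \<le> sa" "sa < ma" "ma \<le> N"
  shows "(\<Sum>j\<in>{1..N}. \<Sum>l\<in>{j+1..N}. if ma = l+1 \<and> sa = j \<and> j < mb \<and> mb \<le> l \<and> sbb < j then 1 else (0::int))
     = (if ma > mb \<and> mb > sa \<and> sa > sbb then 1 else 0)"
proof -
  have "(\<Sum>l\<in>{j+1..N}. if ma = l+1 \<and> sa = j \<and> j < mb \<and> mb \<le> l \<and> sbb < j then 1 else (0::int))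
     = (if ma - 1 \<in> {j+1..N} \<and> sa = j \<and> j < mb \<and> mb \<le> ma - 1 \<and> sbb < j then 1 else 0)" for j
  proof -
    have "(\<Sum>l\<in>{j+1..N}. if ma = l+1 \<and> sa = j \<and> j < mb \<and> mb \<le> l \<and> sbb < j then 1 else (0::int))
       = (\<Sum>l\<in>{j+1..N}. if l = ma - 1 \<and> (sa = j \<and> j < mb \<and> mb \<le> l \<and> sbb < j) then 1 else (0::int))"
      using assms by (intro sum.cong) auto
    also have "\<dots> = (if ma - 1 \<in> {j+1..N} \<and> sa = j \<and> j < mb \<and> mb \<le> ma - 1 \<and> sbb < j then 1 else 0)" by (rule delta_if) simp
    finally show ?thesis .
  qed
  then have "(\<Sum>j\<in>{1..N}. \<Sum>l\<in>{j+1..N}. if ma = l+1 \<and> sa = j \<and> j < mb \<and> mb \<le> l \<and> sbb < j then 1 else (0::int))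
     = (\<Sum>j\<in>{1..N}. if j = sa \<and> (ma - 1 \<in> {j+1..N} \<and> j < mb \<and> mb \<le> ma - 1 \<and> sbb < j) then 1 else 0)"
    by (intro sum.cong) auto
  also have "\<dots> = (if sa \<in> {1..N} \<and> (ma - 1 \<in> {sa+1..N} \<and> sa < mb \<and> mb \<le> ma - 1 \<and> sbb < sa) then 1 else 0)" by (rule delta_if) simp
  finally show ?thesis using assms by auto
qed



lemma swap3: "(\<Sum>l\<in>L. \<Sum>a\<in>A. \<Sum>a'\<in>B. f l a a') = (\<Sum>a\<in>A. \<Sum>a'\<in>B. \<Sum>l\<in>L. f l a a')"
proof -
  have "(\<Sum>l\<in>L. \<Sum>a\<in>A. \<Sum>a'\<in>B. f l a a') = (\<Sum>a\<in>A. \<Sum>l\<in>L. \<Sum>a'\<in>B. f l a a')"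
    by (rule sum.swap)
  also have "\<dots> = (\<Sum>a\<in>A. \<Sum>a'\<in>B. \<Sum>l\<in>L. f l a a')"
    by (intro sum.cong refl) (rule sum.swap)
  finally show ?thesis .
qed

theorem lemma2p3:
  fixes beta gamma :: "nat list" and T :: "nat \<Rightarrow> nat \<Rightarrow> entry"
  assumes "klein_tableau beta gamma T"
  shows "x_Pi beta gamma T = int (x_Delta (arc_diagram beta gamma T))"
proof -
  note K = assms
  define S where "S = skew beta gamma"
  define A where "A = {(m, c). (m, c) \<in> S \<and> is_two (T m c)}"
  define sb where "sb = (\<lambda>p. sub (T (fst p) (snd p)))"
  define N where "N = nrows (diagram beta)"
  define z where "z = zeta_shape beta gamma T"
  define g where "g = diagram gamma"
  define b where "b = beta_shape beta gamma T"
  define on where "on = ones_in_row beta gamma T"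
  define tw where "tw = num_twos_sub beta gamma T"
  have fA: "finite A" unfolding A_def S_def by (rule finite_subset[OF _ finite_skew]) auto
  have Aprops: "1 \<le> sb a \<and> sb a < fst a \<and> fst a \<le> N" if aA: "a \<in> A" for a
  proof -
    obtain m c where a: "a = (m,c)" by force
    then obtain r where r: "T m c = Two r" "(m,c) \<in> S" using aA unfolding A_def by (cases "T m c") auto
    then have "1 \<le> r \<and> r \<le> m - 1" using K unfolding klein_tableau_def S_def by blast
    moreover have "m \<le> N"
    proof -
      have "(m,c) \<in> diagram beta" using r(2) unfolding S_def skew_def by auto
      then have "m \<in> insert 0 (fst ` diagram beta)" by force
      then show ?thesis unfolding N_def nrows_def using finite_diagram by simp
    qed
    ultimately show ?thesis using a r by (auto simp: sb_def)
  qed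
  have twon: "tw r \<le> on r" for r using K unfolding klein_tableau_def tw_def on_def by blast
  have arc: "(\<lambda>(m, c). Arc m (sub (T m c))) a = Arc (fst a) (sb a)" for a
    by (cases a) (simp add: sb_def)
  have E1: "int (rowlen z j) - int (rowlen g j) + int (card (b (j - 1))) - int (card (b j)) = int (on j) - int (tw j)"
    if "1 \<le> j" for j
    using rowlen_z[of beta gamma T j] card_b[OF that, of beta gamma T] unfolding z_def g_def b_def on_def tw_def by simp
  have cnt: "int (rowlen (b i) k) - int (rowlen z k) = (\<Sum>a\<in>A. if fst a = k \<and> sb a \<le> i then 1 else 0)" for i k
    using rowlen_b[of beta gamma T i k] cnt_sum[OF K, of k i] unfolding z_def b_def A_def S_def sb_def
    by (simp add: of_nat_sum of_bool_def[symmetric])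
  have E2: "int (rowlen (b (j-1)) k) - int (rowlen z k) = (\<Sum>a\<in>A. if fst a = k \<and> sb a < j then 1 else 0)"
    if "1 \<le> j" for j k
    unfolding cnt using that by (intro sum.cong) auto
  have E3: "int (rowlen (b j) (l+1)) - int (rowlen (b (j-1)) (l+1)) = (\<Sum>a\<in>A. if fst a = l+1 \<and> sb a = j then 1 else 0)"
    if "1 \<le> j" for j l
  proof -
    have "int (rowlen (b j) (l+1)) - int (rowlen (b (j-1)) (l+1))
       = (int (rowlen (b j) (l+1)) - int (rowlen z (l+1))) - (int (rowlen (b (j-1)) (l+1)) - int (rowlen z (l+1)))"
      by simp
    also have "\<dots> = (\<Sum>a\<in>A. (if fst a = l+1 \<and> sb a \<le> j then 1 else 0) - (if fst a = l+1 \<and> sb a \<le> j - 1 then 1 else 0))"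
      unfolding cnt by (simp add: sum_subtractf)
    also have "\<dots> = (\<Sum>a\<in>A. if fst a = l+1 \<and> sb a = j then 1 else 0)"
      using that by (intro sum.cong) auto
    finally show ?thesis .
  qed
  have T1: "(\<Sum>j\<in>{1..N}. (int (rowlen z j) - int (rowlen g j) + int (card (b (j - 1))) - int (card (b j)))
           * (\<Sum>k\<in>{j+1..N}. int (rowlen (b (j - 1)) k) - int (rowlen z k)))
     = (\<Sum>a\<in>A. \<Sum>r\<in>{1..N}. (int (on r) - int (tw r)) * (if fst a > r \<and> r > sb a then 1 else 0))"
  proof -
    have inner: "(\<Sum>k\<in>{j+1..N}. int (rowlen (b (j - 1)) k) - int (rowlen z k))
        = (\<Sum>a\<in>A. if fst a > j \<and> j > sb a then 1 else 0)" if "j \<in> {1..N}" for j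
    proof -
      have "(\<Sum>k\<in>{j+1..N}. int (rowlen (b (j - 1)) k) - int (rowlen z k))
          = (\<Sum>k\<in>{j+1..N}. \<Sum>a\<in>A. if fst a = k \<and> sb a < j then 1 else 0)"
        using that by (intro sum.cong refl E2) auto
      also have "\<dots> = (\<Sum>a\<in>A. \<Sum>k\<in>{j+1..N}. if k = fst a \<and> sb a < j then 1 else 0)"
        by (subst sum.swap) (intro sum.cong, auto)
      also have "\<dots> = (\<Sum>a\<in>A. if fst a \<in> {j+1..N} \<and> sb a < j then 1 else 0)"
        by (intro sum.cong refl delta_if) simp
      also have "\<dots> = (\<Sum>a\<in>A. if fst a > j \<and> j > sb a then 1 else 0)"
        using Aprops by (intro sum.cong) auto
      finally show ?thesis .
    qed
    have "(\<Sum>j\<in>{1..N}. (int (rowlen z j) - int (rowlen g j) + int (card (b (j - 1))) - int (card (b j)))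
           * (\<Sum>k\<in>{j+1..N}. int (rowlen (b (j - 1)) k) - int (rowlen z k)))
        = (\<Sum>j\<in>{1..N}. (int (on j) - int (tw j)) * (\<Sum>a\<in>A. if fst a > j \<and> j > sb a then 1 else 0))"
    proof (intro sum.cong refl)
      fix j assume j: "j \<in> {1..N}"
      then have j1: "1 \<le> j" by simp
      show "(int (rowlen z j) - int (rowlen g j) + int (card (b (j - 1))) - int (card (b j)))
           * (\<Sum>k\<in>{j+1..N}. int (rowlen (b (j - 1)) k) - int (rowlen z k))
        = (int (on j) - int (tw j)) * (\<Sum>a\<in>A. if fst a > j \<and> j > sb a then 1 else 0)"
        unfolding E1[OF j1] inner[OF j] ..
    qed
    also have "\<dots> = (\<Sum>j\<in>{1..N}. \<Sum>a\<in>A. (int (on j) - int (tw j)) * (if fst a > j \<and> j > sb a then 1 else 0))"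
      by (simp add: sum_distrib_left)
    also have "\<dots> = (\<Sum>a\<in>A. \<Sum>r\<in>{1..N}. (int (on r) - int (tw r)) * (if fst a > r \<and> r > sb a then 1 else 0))" by (rule sum.swap)
    finally show ?thesis .
  qed
  have T2: "(\<Sum>j\<in>{1..N}. \<Sum>l\<in>{j+1..N}.
           (int (rowlen (b j) (l + 1)) - int (rowlen (b (j - 1)) (l + 1)))
           * (\<Sum>k\<in>{j+1..l}. int (rowlen (b (j - 1)) k) - int (rowlen z k)))
     = (\<Sum>a\<in>A. \<Sum>a'\<in>A. if fst a > fst a' \<and> fst a' > sb a \<and> sb a > sb a' then 1 else 0)"
  proof -
    have step: "(int (rowlen (b j) (l + 1)) - int (rowlen (b (j - 1)) (l + 1)))
           * (\<Sum>k\<in>{j+1..l}. int (rowlen (b (j - 1)) k) - int (rowlen z k))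
        = (\<Sum>a\<in>A. \<Sum>a'\<in>A. if fst a = l+1 \<and> sb a = j \<and> j < fst a' \<and> fst a' \<le> l \<and> sb a' < j then 1 else 0)"
      if "j \<in> {1..N}" for j l
    proof -
      have "(\<Sum>k\<in>{j+1..l}. int (rowlen (b (j - 1)) k) - int (rowlen z k))
          = (\<Sum>k\<in>{j+1..l}. \<Sum>a\<in>A. if fst a = k \<and> sb a < j then 1 else 0)"
        using that by (intro sum.cong refl E2) auto
      also have "\<dots> = (\<Sum>a\<in>A. \<Sum>k\<in>{j+1..l}. if k = fst a \<and> sb a < j then 1 else 0)"
        by (subst sum.swap) (intro sum.cong, auto)
      also have "\<dots> = (\<Sum>a\<in>A. if fst a \<in> {j+1..l} \<and> sb a < j then 1 else 0)"
        by (intro sum.cong refl delta_if) simp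
      finally have i2: "(\<Sum>k\<in>{j+1..l}. int (rowlen (b (j - 1)) k) - int (rowlen z k))
          = (\<Sum>a\<in>A. if fst a \<in> {j+1..l} \<and> sb a < j then 1 else 0)" .
      have j1: "1 \<le> j" using that by simp
      show ?thesis
        unfolding i2 E3[OF j1] using that
        by (simp add: sum_product) (intro sum.cong refl, auto)
    qed
    have "(\<Sum>j\<in>{1..N}. \<Sum>l\<in>{j+1..N}.
           (int (rowlen (b j) (l + 1)) - int (rowlen (b (j - 1)) (l + 1)))
           * (\<Sum>k\<in>{j+1..l}. int (rowlen (b (j - 1)) k) - int (rowlen z k)))
        = (\<Sum>j\<in>{1..N}. \<Sum>l\<in>{j+1..N}. \<Sum>a\<in>A. \<Sum>a'\<in>A. if fst a = l+1 \<and> sb a = j \<and> j < fst a' \<and> fst a' \<le> l \<and> sb a' < j then 1 else 0)"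
      by (intro sum.cong refl step) simp
    also have "\<dots> = (\<Sum>a\<in>A. \<Sum>a'\<in>A. \<Sum>j\<in>{1..N}. \<Sum>l\<in>{j+1..N}. if fst a = l+1 \<and> sb a = j \<and> j < fst a' \<and> fst a' \<le> l \<and> sb a' < j then 1 else 0)"
    proof -
      have "(\<Sum>j\<in>{1..N}. \<Sum>l\<in>{j+1..N}. \<Sum>a\<in>A. \<Sum>a'\<in>A. if fst a = l+1 \<and> sb a = j \<and> j < fst a' \<and> fst a' \<le> l \<and> sb a' < j then (1::int) else 0)
         = (\<Sum>j\<in>{1..N}. \<Sum>a\<in>A. \<Sum>a'\<in>A. \<Sum>l\<in>{j+1..N}. if fst a = l+1 \<and> sb a = j \<and> j < fst a' \<and> fst a' \<le> l \<and> sb a' < j then 1 else 0)"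
        by (intro sum.cong refl) (rule swap3)
      also have "\<dots> = (\<Sum>a\<in>A. \<Sum>a'\<in>A. \<Sum>j\<in>{1..N}. \<Sum>l\<in>{j+1..N}. if fst a = l+1 \<and> sb a = j \<and> j < fst a' \<and> fst a' \<le> l \<and> sb a' < j then 1 else 0)"
        by (rule swap3)
      finally show ?thesis .
    qed
    also have "\<dots> = (\<Sum>a\<in>A. \<Sum>a'\<in>A. if fst a > fst a' \<and> fst a' > sb a \<and> sb a > sb a' then 1 else 0)"
      using Aprops by (intro sum.cong refl double_delta) auto
    finally show ?thesis .
  qed
  have R: "x_Delta (arc_diagram beta gamma T) =
    (\<Sum>a\<in>A. \<Sum>a'\<in>A. if fst a > fst a' \<and> fst a' > sb a \<and> sb a > sb a' then 1 else 0)
  + (\<Sum>a\<in>A. \<Sum>r\<in>{1..N}. (on r - tw r) * (if fst a > r \<and> r > sb a then 1 else 0))"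
    unfolding rhs arc A_def S_def N_def on_def tw_def by simp
  have R2: "int (\<Sum>a\<in>A. \<Sum>r\<in>{1..N}. (on r - tw r) * (if fst a > r \<and> r > sb a then 1 else 0))
     = (\<Sum>a\<in>A. \<Sum>r\<in>{1..N}. (int (on r) - int (tw r)) * (if fst a > r \<and> r > sb a then 1 else 0))"
    by (simp add: of_nat_sum of_nat_diff twon of_bool_def[symmetric])
  have R1: "int (\<Sum>a\<in>A. \<Sum>a'\<in>A. if fst a > fst a' \<and> fst a' > sb a \<and> sb a > sb a' then 1 else 0)
     = (\<Sum>a\<in>A. \<Sum>a'\<in>A. if fst a > fst a' \<and> fst a' > sb a \<and> sb a > sb a' then 1 else (0::int))"
    by (simp add: of_nat_sum of_bool_def[symmetric])
  show ?thesis
    unfolding x_Pi_def Let_def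
    unfolding N_def[symmetric] g_def[symmetric] z_def[symmetric] b_def[symmetric]
    unfolding T1 T2 R of_nat_add R1 R2 by simp
qed

end
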